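(* Let $n,k,l$ be nonnegative integers with $k+l\le n$, and $\alpha,\beta>-1$. The constrained dual Bernstein polynomials have the B\'ezier–Bernstein representation \[ D^{(n,k,l)}_i(x;\alpha,\beta)=\sum_{j=k}^{n-l}C_{ij}(n,k,l,\alpha,\beta)\,B^n_j(x)\qquad(k\le i\le n-l), \] where \[ C_{ij}(n,k,l,\alpha,\beta):=U_i\,U_j\,c_{i-k,\,j-k}(n-k-l,\ \alpha+2l,\ \beta+2k),\qquad U_i:=\binom{n-k-l}{i-k}\binom{n}{i}^{-1}, \] and $c_{pq}(N,a,b)$ denotes the B\'ezier coefficients of the unconstrained dual Bernstein polynomials, $D^N_p(x;a,b)=\sum_{q=0}^N c_{pq}(N,a,b)B^N_q(x)$ (explicitly, $c_{pq}(N,a,b)=\frac{1}{B(a+1,b+1)}\sum_{m=0}^N\frac{(2m/(a+b+1)+1)(b+1)_m(a+b+1)_m}{m!\,(a+1)_m}Q_m(p;b,a,N)Q_m(q;b,a,N)$).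
   Context: For $a,b>-1$ define the inner product $\langle f,g\rangle_{a,b}:=\int_0^1(1-x)^{a}x^{b}f(x)g(x)\,dx$. Bernstein polynomials: $B^n_i(x)=\binom ni x^i(1-x)^{n-i}$. The unconstrained dual Bernstein polynomials $D^N_p(x;a,b)$, $0\le p\le N$, are the unique polynomials of degree $\le N$ with $\langle D^N_p,B^N_q\rangle_{a,b}=\delta_{pq}$. For $k+l\le n$, $\Pi_n^{(k,l)}$ is the space of polynomials $P$ of degree $\le n$ with $P^{(i)}(0)=0$ for $0\le i\le k-1$ and $P^{(j)}(1)=0$ for $0\le j\le l-1$; it has basis $B^n_k,\ldots,B^n_{n-l}$. The constrained dual Bernstein polynomials $D^{(n,k,l)}_i(x;\alpha,\beta)\in\Pi_n^{(k,l)}$, $k\le i\le n-l$, are the unique elements of $\Pi_n^{(k,l)}$ with $\langle D^{(n,k,l)}_i,B^n_j\rangle_{\alpha,\beta}=\delta_{ij}$ for $i,j=k,\ldots,n-l$. Notation: $(c)_k:=\prod_{j=0}^{k-1}(c+j)$; $B(\lambda,\mu)$ is the beta function; Hahn polynomials $Q_m(x;a,b,N):={}_3F_2(-m,m+a+b+1,-x;a+1,-N;1)$. *)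

theory Defs
  imports "HOL-Analysis.Analysis" "HOL-Computational_Algebra.Polynomial"
begin

definition wip :: "real \<Rightarrow> real \<Rightarrow> (real \<Rightarrow> real) \<Rightarrow> (real \<Rightarrow> real) \<Rightarrow> real" where
  "wip a b f g = integral {0..1} (\<lambda>x. (1 - x) powr a * x powr b * f x * g x)"

definition bern :: "nat \<Rightarrow> nat \<Rightarrow> real \<Rightarrow> real" where
  "bern n i x = real (n choose i) * x ^ i * (1 - x) ^ (n - i)"

definition udual :: "nat \<Rightarrow> real \<Rightarrow> real \<Rightarrow> nat \<Rightarrow> real poly" where
  "udual N a b p = (THE P. degree P \<le> N \<and>
      (\<forall>q\<in>{0..N}. wip a b (poly P) (bern N q) = (if p = q then 1 else 0)))"

definition ucoef :: "nat \<Rightarrow> real \<Rightarrow> real \<Rightarrow> nat \<Rightarrow> nat \<Rightarrow> real" where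
  "ucoef N a b p = (THE c. (\<forall>q>N. c q = 0) \<and>
      poly (udual N a b p) = (\<lambda>x. \<Sum>q=0..N. c q * bern N q x))"

definition Pi_kl :: "nat \<Rightarrow> nat \<Rightarrow> nat \<Rightarrow> real poly set" where
  "Pi_kl n k l = {P. degree P \<le> n \<and>
      (\<forall>i<k. poly ((pderiv ^^ i) P) 0 = 0) \<and>
      (\<forall>j<l. poly ((pderiv ^^ j) P) 1 = 0)}"

definition cdual :: "nat \<Rightarrow> nat \<Rightarrow> nat \<Rightarrow> real \<Rightarrow> real \<Rightarrow> nat \<Rightarrow> real poly" where
  "cdual n k l \<alpha> \<beta> i = (THE P. P \<in> Pi_kl n k l \<and>
      (\<forall>j\<in>{k..n-l}. wip \<alpha> \<beta> (poly P) (bern n j) = (if i = j then 1 else 0)))"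

definition Ucoef :: "nat \<Rightarrow> nat \<Rightarrow> nat \<Rightarrow> nat \<Rightarrow> real" where
  "Ucoef n k l i = real ((n - k - l) choose (i - k)) / real (n choose i)"

definition Ccoef :: "nat \<Rightarrow> nat \<Rightarrow> nat \<Rightarrow> real \<Rightarrow> real \<Rightarrow> nat \<Rightarrow> nat \<Rightarrow> real" where
  "Ccoef n k l \<alpha> \<beta> i j = Ucoef n k l i * Ucoef n k l j *
      ucoef (n - k - l) (\<alpha> + 2 * real l) (\<beta> + 2 * real k) (i - k) (j - k)"

end

theory Submission
  imports Defs "Jordan_Normal_Form.Determinant"
begin


lemma lin_solve:
  fixes G :: "nat \<Rightarrow> nat \<Rightarrow> real"
  assumes inj: "\<And>v. (\<forall>q\<le>N. (\<Sum>r\<le>N. G q r * v r) = 0) \<Longrightarrow> (\<forall>r\<le>N. v r = 0)"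
  shows "\<exists>v. \<forall>q\<le>N. (\<Sum>r\<le>N. G q r * v r) = b q"
proof -
  define A :: "real mat" where "A = mat (Suc N) (Suc N) (\<lambda>(i,j). G i j)"
  have A: "A \<in> carrier_mat (Suc N) (Suc N)" unfolding A_def by simp
  have mv: "(A *\<^sub>v w) $ q = (\<Sum>r\<le>N. G q r * w $ r)" if "q \<le> N" "dim_vec w = Suc N" for w q
    using that unfolding A_def by (simp add: scalar_prod_def lessThan_Suc_atMost atLeast0LessThan)
  have "Determinant.det A \<noteq> 0"
  proof
    assume "Determinant.det A = 0"
    then obtain w where w: "w \<in> carrier_vec (Suc N)" "w \<noteq> 0\<^sub>v (Suc N)" "A *\<^sub>v w = 0\<^sub>v (Suc N)"
      using det_0_iff_vec_prod_zero_field[OF A] by blast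
    have "\<forall>q\<le>N. (\<Sum>r\<le>N. G q r * w $ r) = 0"
    proof (intro allI impI)
      fix q assume q: "q \<le> N"
      have "(A *\<^sub>v w) $ q = 0" using w(3) q by simp
      thus "(\<Sum>r\<le>N. G q r * w $ r) = 0" using mv[OF q] w(1) by simp
    qed
    from inj[OF this] have "w = 0\<^sub>v (Suc N)" using w(1) by (intro eq_vecI) auto
    with w(2) show False by simp
  qed
  from det_non_zero_imp_unit[OF A this, of "()"]
  obtain B where AB: "A * B = 1\<^sub>m (Suc N)" and B: "B \<in> carrier_mat (Suc N) (Suc N)"
    unfolding Units_def ring_mat_def by auto
  define bv where "bv = vec (Suc N) b"
  define w where "w = B *\<^sub>v bv"
  have wc: "dim_vec w = Suc N" unfolding w_def using B by simp
  have "A *\<^sub>v w = (A * B) *\<^sub>v bv" unfolding w_def bv_def using A B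
    by (simp add: assoc_mult_mat_vec)
  also have "\<dots> = bv" unfolding AB bv_def by simp
  finally have Aw: "A *\<^sub>v w = bv" .
  show ?thesis
  proof (intro exI allI impI)
    fix q assume q: "q \<le> N"
    have "(A *\<^sub>v w) $ q = b q" using Aw q unfolding bv_def by simp
    thus "(\<Sum>r\<le>N. G q r * (\<lambda>r. w $ r) r) = b q" using mv[OF q wc] by simp
  qed
qed


lemma wint:
  fixes a b :: real and g :: "real \<Rightarrow> real"
  assumes a: "a > -1" and b: "b > -1" and g: "continuous_on {0..1} g"
  shows "(\<lambda>x. (1 - x) powr a * x powr b * g x) integrable_on {0..1}"
proof -
  have "((\<lambda>t. t powr ((b+1) - 1) * (1 - t) powr ((a+1) - 1)) has_integral Beta (b+1) (a+1)) {0..1}"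
    using a b by (intro has_integral_Beta_real) auto
  hence hi: "(\<lambda>t. t powr b * (1 - t) powr a) integrable_on {0..1}" by (auto simp: integrable_on_def)
  have ha: "(\<lambda>t. t powr b * (1 - t) powr a) absolutely_integrable_on {0..1}"
    by (rule nonnegative_absolutely_integrable_1[OF hi]) auto
  have gm: "g \<in> borel_measurable (lebesgue_on {0..1})"
    by (rule continuous_imp_measurable_on_sets_lebesgue[OF g]) auto
  have gb: "bounded (g ` {0..1})"
    by (rule compact_imp_bounded[OF compact_continuous_image[OF g compact_Icc]])
  have "(\<lambda>x. g x * (x powr b * (1 - x) powr a)) absolutely_integrable_on {0..1}"
    by (rule absolutely_integrable_bounded_measurable_product_real[OF gm _ gb ha]) auto
  hence "(\<lambda>x. g x * (x powr b * (1 - x) powr a)) integrable_on {0..1}"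
    using absolutely_integrable_on_def by blast
  thus ?thesis by (simp add: mult_ac)
qed

lemma wip_int:
  fixes P Q :: "real poly" and a b :: real
  assumes "a > -1" "b > -1"
  shows "(\<lambda>x. (1 - x) powr a * x powr b * poly P x * poly Q x) integrable_on {0..1}"
proof -
  have "(\<lambda>x. (1 - x) powr a * x powr b * (poly P x * poly Q x)) integrable_on {0..1}"
    by (rule wint[OF assms]) (intro continuous_intros)
  thus ?thesis by (simp add: mult_ac)
qed

lemma wip_sym: "wip a b f g = wip a b g f"
  unfolding wip_def by (simp add: mult_ac)

lemma wip_add:
  assumes "a > -1" "b > -1"
  shows "wip a b (poly (P + Q)) (poly R) = wip a b (poly P) (poly R) + wip a b (poly Q) (poly R)"
proof -
  have "wip a b (poly (P + Q)) (poly R) = integral {0..1} (\<lambda>x. (1 - x) powr a * x powr b * poly P x * poly R x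
     + (1 - x) powr a * x powr b * poly Q x * poly R x)"
    unfolding wip_def by (simp add: algebra_simps)
  also have "\<dots> = wip a b (poly P) (poly R) + wip a b (poly Q) (poly R)"
    unfolding wip_def by (rule integral_add; rule wip_int[OF assms])
  finally show ?thesis .
qed

lemma wip_smult: "wip a b (poly (Polynomial.smult c P)) g = c * wip a b (poly P) g"
proof -
  have "wip a b (poly (Polynomial.smult c P)) g = integral {0..1} (\<lambda>x. c * ((1 - x) powr a * x powr b * poly P x * g x))"
    unfolding wip_def by (simp add: mult_ac)
  also have "\<dots> = c * wip a b (poly P) g" unfolding wip_def by simp
  finally show ?thesis .
qed

lemma wip_zero: "wip a b (poly 0) g = 0"
  unfolding wip_def by simp

lemma wip_diff:
  assumes "a > -1" "b > -1"
  shows "wip a b (poly (P - Q)) (poly R) = wip a b (poly P) (poly R) - wip a b (poly Q) (poly R)"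
  using wip_add[OF assms, of "P - Q" Q R] by simp

lemma wip_sum:
  assumes "a > -1" "b > -1"
  shows "wip a b (poly (\<Sum>q\<in>A. F q)) (poly R) = (\<Sum>q\<in>A. wip a b (poly (F q)) (poly R))"
proof (induction A rule: infinite_finite_induct)
  case (infinite A) thus ?case by (simp add: wip_def)
next
  case empty thus ?case by (simp add: wip_def)
next
  case (insert x B) thus ?case using wip_add[OF assms, of "F x" "sum F B" R] by (simp del: poly_add)
qed

lemma wip_pos:
  assumes a: "a > -1" and b: "b > -1" and z: "wip a b (poly P) (poly P) = 0"
  shows "P = 0"
proof -
  define F where "F x = (1 - x) powr a * x powr b * poly P x * poly P x" for x
  have Fnn: "F x \<ge> 0" for x unfolding F_def
    by (metis mult.assoc mult_nonneg_nonneg powr_ge_zero zero_le_square)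
  have Fi: "F integrable_on {0..1}" unfolding F_def using wip_int[OF a b] .
  have I0: "integral {0..1} F = 0" using z unfolding wip_def F_def .
  have root: "poly P x0 = 0" if x0: "0 < x0" "x0 < 1" for x0
  proof -
    define u v where "u = x0 / 2" and "v = (1 + x0) / 2"
    have uv: "0 < u" "u < x0" "x0 < v" "v < 1" using x0 unfolding u_def v_def by auto
    have sub: "{u..v} \<subseteq> {0..1}" using uv by auto
    have Fi2: "F integrable_on {u..v}"
      using integrable_on_subinterval[OF Fi, of u v] sub by simp
    have "integral {u..v} F \<le> integral {0..1} F"
      by (rule integral_subset_le[OF sub Fi2 Fi]) (simp add: Fnn)
    moreover have "integral {u..v} F \<ge> 0" by (rule integral_nonneg[OF Fi2]) (simp add: Fnn)
    ultimately have "integral {u..v} F = 0" using I0 by simp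
    hence hi: "(F has_integral 0) (cbox u v)" using Fi2 by (simp add: has_integral_integral)
    have cont: "continuous_on (cbox u v) F" unfolding F_def
      using uv by (intro continuous_intros) auto
    have "F x0 = 0"
      by (rule has_integral_0_cbox_imp_0[OF cont _ hi]) (use uv in \<open>auto simp: Fnn\<close>)
    moreover have "(1 - x0) powr a > 0" "x0 powr b > 0" using x0 by auto
    ultimately show ?thesis unfolding F_def by simp
  qed
  show ?thesis
  proof (rule ccontr)
    assume "P \<noteq> 0"
    hence "finite {x. poly P x = 0}" by (rule poly_roots_finite)
    moreover have "{0<..<(1::real)} \<subseteq> {x. poly P x = 0}" using root by auto
    ultimately have "finite {0<..<(1::real)}" by (rule finite_subset[rotated])
    thus False using infinite_Ioo[of "0::real" 1] by simp
  qed
qed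

definition bp :: "nat \<Rightarrow> nat \<Rightarrow> real poly" where
  "bp N q = Polynomial.smult (of_nat (N choose q)) ([:0,1:]^q * [:1,-1:]^(N-q))"

lemma poly_1m: "poly [:1,-1:] x = 1 - (x::real)" by simp
lemma poly_x: "poly [:0,1:] x = (x::real)" by simp

lemma poly_bp: "poly (bp N q) = bern N q"
  by (rule ext) (simp add: bp_def bern_def poly_power del: poly_pCons add: poly_1m poly_x)

lemma degree_bp: "q \<le> N \<Longrightarrow> degree (bp N q) \<le> N"
proof -
  assume q: "q \<le> N"
  have "degree (bp N q) \<le> degree (([:0,1:]::real poly)^q * [:1,-1:]^(N-q))"
    unfolding bp_def by (rule degree_smult_le)
  also have "\<dots> \<le> degree (([:0,1:]::real poly)^q) + degree (([:1,-1:]::real poly)^(N-q))"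
    by (rule degree_mult_le)
  also have "\<dots> \<le> q * 1 + (N - q) * 1"
    by (intro add_mono order.trans[OF degree_power_le]) auto
  finally show ?thesis using q by simp
qed

lemma monom_span:
  fixes x :: real
  assumes m: "m \<le> N"
  shows "x^m = (\<Sum>q\<le>N. (if m \<le> q then real (N-m choose (q-m)) / real (N choose q) else 0) * bern N q x)"
proof -
  have "x^m = x^m * (x + (1-x))^(N-m)" by simp
  also have "\<dots> = x^m * (\<Sum>j\<le>N-m. real (N-m choose j) * x^j * (1-x)^(N-m-j))"
    by (subst binomial_ring) simp
  also have "\<dots> = (\<Sum>j\<le>N-m. real (N-m choose j) * x^(j+m) * (1-x)^(N-(j+m)))"
    unfolding sum_distrib_left by (intro sum.cong refl) (simp add: power_add mult_ac add.commute[of m])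
  also have "\<dots> = (\<Sum>q\<in>{0+m..(N-m)+m}. real (N-m choose (q-m)) * x^q * (1-x)^(N-q))"
    by (subst sum.shift_bounds_cl_nat_ivl) (simp add: atLeast0AtMost)
  also have "{0+m..(N-m)+m} = {..N} \<inter> {q. m \<le> q}" using m by auto
  also have "(\<Sum>q\<in>{..N} \<inter> {q. m \<le> q}. real (N-m choose (q-m)) * x^q * (1-x)^(N-q))
      = (\<Sum>q\<in>{..N} \<inter> {q. m \<le> q}. real (N-m choose (q-m)) / real (N choose q) * bern N q x)"
    by (rule sum.cong) (auto simp: bern_def)
  also have "\<dots> = (\<Sum>q\<le>N. (if m \<le> q then real (N-m choose (q-m)) / real (N choose q) else 0) * bern N q x)"
    by (subst sum.inter_restrict) (auto intro!: sum.cong)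
  finally show ?thesis .
qed
lemma span_bern:
  fixes P :: "real poly"
  assumes "degree P \<le> N"
  shows "\<exists>c. \<forall>x. poly P x = (\<Sum>q\<le>N. c q * bern N q x)"
proof -
  define T where "T m q = (if m \<le> q then real (N-m choose (q-m)) / real (N choose q) else 0)" for m q
  define c where "c q = (\<Sum>m\<le>N. coeff P m * T m q)" for q
  have "poly P x = (\<Sum>q\<le>N. c q * bern N q x)" for x
  proof -
    have "poly P x = (\<Sum>m\<le>degree P. coeff P m * x ^ m)" by (rule poly_altdef)
    also have "\<dots> = (\<Sum>m\<le>N. coeff P m * x ^ m)"
      by (rule sum.mono_neutral_left) (use assms in \<open>auto simp: coeff_eq_0\<close>)
    also have "\<dots> = (\<Sum>m\<le>N. coeff P m * (\<Sum>q\<le>N. T m q * bern N q x))"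
    proof (rule sum.cong[OF refl])
      fix m assume "m \<in> {..N}"
      hence "x ^ m = (\<Sum>q\<le>N. T m q * bern N q x)" unfolding T_def by (intro monom_span) simp
      thus "coeff P m * x ^ m = coeff P m * (\<Sum>q\<le>N. T m q * bern N q x)" by simp
    qed
    also have "\<dots> = (\<Sum>m\<le>N. \<Sum>q\<le>N. coeff P m * T m q * bern N q x)"
      by (simp add: sum_distrib_left mult.assoc)
    also have "\<dots> = (\<Sum>q\<le>N. \<Sum>m\<le>N. coeff P m * T m q * bern N q x)"
      by (rule sum.swap)
    also have "\<dots> = (\<Sum>q\<le>N. c q * bern N q x)"
      unfolding c_def by (simp add: sum_distrib_right)
    finally show ?thesis .
  qed
  thus ?thesis by blast
qed

lemma span_bp:
  fixes P :: "real poly"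
  assumes "degree P \<le> N"
  shows "\<exists>c. P = (\<Sum>q\<le>N. Polynomial.smult (c q) (bp N q))"
proof -
  obtain c where c: "\<And>x. poly P x = (\<Sum>q\<le>N. c q * bern N q x)" using span_bern[OF assms] by blast
  have "poly P = poly (\<Sum>q\<le>N. Polynomial.smult (c q) (bp N q))"
    by (rule ext) (simp add: c poly_sum poly_bp)
  hence "P = (\<Sum>q\<le>N. Polynomial.smult (c q) (bp N q))" by (simp add: poly_eq_poly_eq_iff)
  thus ?thesis by blast
qed

lemma bern_indep:
  assumes z: "\<And>x. (\<Sum>q\<le>N. c q * bern N q x) = 0" and q: "q \<le> N"
  shows "c q = 0"
proof (rule ccontr)
  assume nz: "c q \<noteq> 0"
  define q0 where "q0 = (LEAST q. q \<le> N \<and> c q \<noteq> 0)"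
  have q0: "q0 \<le> N" "c q0 \<noteq> 0" using LeastI[of "\<lambda>q. q \<le> N \<and> c q \<noteq> 0" q] q nz unfolding q0_def by auto
  have below: "c r = 0" if "r < q0" "r \<le> N" for r
    using not_less_Least[of r "\<lambda>q. q \<le> N \<and> c q \<noteq> 0"] that unfolding q0_def by auto
  define S where "S = (\<Sum>q\<le>N. Polynomial.smult (c q) (bp N q))"
  have "poly S = (\<lambda>x. 0)" unfolding S_def by (rule ext) (simp add: poly_sum poly_bp z)
  hence S0: "S = 0" by (metis poly_all_0_iff_0)
  have tm: "coeff (Polynomial.smult (c r) (bp N r)) q0 = (if r = q0 then c q0 * real (N choose q0) else 0)"
    if "r \<le> N" for r
  proof -
    have "coeff (Polynomial.smult (c r) (bp N r)) q0 =
        c r * real (N choose r) * coeff (monom 1 r * [:1,-1:]^(N-r)) q0"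
      by (simp add: bp_def monom_altdef)
    also have "\<dots> = (if r = q0 then c q0 * real (N choose q0) else 0)"
    proof (cases "r < q0")
      case True thus ?thesis using below[OF True that] by simp
    next
      case False
      thus ?thesis by (auto simp: coeff_monom_mult poly_0_coeff_0[symmetric] poly_power)
    qed
    finally show ?thesis .
  qed
  have "coeff S q0 = (\<Sum>r\<le>N. (if r = q0 then c q0 * real (N choose q0) else 0))"
    unfolding S_def coeff_sum by (rule sum.cong[OF refl], rule tm, simp)
  also have "\<dots> = c q0 * real (N choose q0)" using q0 by simp
  finally have "coeff S q0 \<noteq> 0" using q0 by simp
  with S0 show False by simp
qed

lemma wip_uniq:
  fixes P P' :: "real poly"
  assumes a: "a > -1" and b: "b > -1" and dP: "degree P \<le> N" and dP': "degree P' \<le> N"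
    and eq: "\<And>q. q \<le> N \<Longrightarrow> wip a b (poly P) (bern N q) = wip a b (poly P') (bern N q)"
  shows "P = P'"
proof -
  define D where "D = P - P'"
  have dD: "degree D \<le> N" unfolding D_def using degree_diff_le[OF dP dP'] .
  have orth: "wip a b (poly D) (bern N q) = 0" if "q \<le> N" for q
    using eq[OF that] wip_diff[OF a b, of P P' "bp N q"] unfolding D_def poly_bp by simp
  obtain c where Dc: "D = (\<Sum>q\<le>N. Polynomial.smult (c q) (bp N q))" using span_bp[OF dD] by blast
  have "wip a b (poly D) (poly D) = wip a b (poly (\<Sum>q\<le>N. Polynomial.smult (c q) (bp N q))) (poly D)"
    by (rule arg_cong[where f="\<lambda>X. wip a b (poly X) (poly D)"], fact Dc)
  also have "\<dots> = (\<Sum>q\<le>N. wip a b (poly (Polynomial.smult (c q) (bp N q))) (poly D))"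
    by (rule wip_sum[OF a b])
  also have "\<dots> = (\<Sum>q\<le>N. c q * wip a b (poly D) (bern N q))"
    by (rule sum.cong[OF refl]) (simp add: wip_smult poly_bp wip_sym[of a b "bern N _"])
  also have "\<dots> = 0" by (simp add: orth)
  finally have "D = 0" by (rule wip_pos[OF a b])
  thus ?thesis unfolding D_def by simp
qed

lemma degree_comb: "degree (\<Sum>r\<le>N. Polynomial.smult (v r) (bp N r)) \<le> N"
  by (rule degree_sum_le) (auto intro: order.trans[OF degree_smult_le] degree_bp)

lemma wip_comb:
  assumes a: "a > -1" and b: "b > -1"
  shows "wip a b (poly (\<Sum>r\<le>N. Polynomial.smult (v r) (bp N r))) (bern N q)
       = (\<Sum>r\<le>N. wip a b (bern N r) (bern N q) * v r)"
proof -
  have "wip a b (poly (\<Sum>r\<le>N. Polynomial.smult (v r) (bp N r))) (poly (bp N q))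
       = (\<Sum>r\<le>N. wip a b (poly (Polynomial.smult (v r) (bp N r))) (poly (bp N q)))"
    by (rule wip_sum[OF a b])
  also have "\<dots> = (\<Sum>r\<le>N. wip a b (poly (bp N r)) (poly (bp N q)) * v r)"
    by (simp add: wip_smult mult.commute)
  finally show ?thesis unfolding poly_bp .
qed

lemma udual_ex:
  assumes a: "a > -1" and b: "b > -1"
  shows "\<exists>P. degree P \<le> N \<and> (\<forall>q\<in>{0..N}. wip a b (poly P) (bern N q) = (if p = q then 1 else 0))"
proof -
  define G where "G q r = wip a b (bern N r) (bern N q)" for q r
  have "\<exists>v. \<forall>q\<le>N. (\<Sum>r\<le>N. G q r * v r) = (\<lambda>q. if p = q then 1 else 0) q"
  proof (rule lin_solve)
    fix v assume h: "\<forall>q\<le>N. (\<Sum>r\<le>N. G q r * v r) = 0"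
    define P where "P = (\<Sum>r\<le>N. Polynomial.smult (v r) (bp N r))"
    have "P = 0"
    proof (rule wip_uniq[OF a b _ _, of P N 0])
      show "degree P \<le> N" unfolding P_def by (rule degree_comb)
      show "degree (0::real poly) \<le> N" by simp
      fix q assume q: "q \<le> N"
      show "wip a b (poly P) (bern N q) = wip a b (poly 0) (bern N q)"
        using h q unfolding P_def wip_comb[OF a b] wip_zero G_def by simp
    qed
    have "(\<Sum>r\<le>N. v r * bern N r x) = poly P x" for x
      unfolding P_def by (simp add: poly_sum poly_bp)
    hence "\<And>x. (\<Sum>r\<le>N. v r * bern N r x) = 0" using \<open>P = 0\<close> by simp
    thus "\<forall>r\<le>N. v r = 0" using bern_indep by blast
  qed
  then obtain v where v: "\<And>q. q \<le> N \<Longrightarrow> (\<Sum>r\<le>N. G q r * v r) = (if p = q then 1 else 0)" by auto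
  define P where "P = (\<Sum>r\<le>N. Polynomial.smult (v r) (bp N r))"
  have "degree P \<le> N" unfolding P_def by (rule degree_comb)
  moreover have "\<forall>q\<in>{0..N}. wip a b (poly P) (bern N q) = (if p = q then 1 else 0)"
    using v unfolding P_def wip_comb[OF a b] G_def by simp
  ultimately show ?thesis by blast
qed

lemma udual_spec:
  assumes a: "a > -1" and b: "b > -1"
  shows "degree (udual N a b p) \<le> N \<and>
    (\<forall>q\<in>{0..N}. wip a b (poly (udual N a b p)) (bern N q) = (if p = q then 1 else 0))"
proof -
  have "\<exists>!P. degree P \<le> N \<and> (\<forall>q\<in>{0..N}. wip a b (poly P) (bern N q) = (if p = q then 1 else 0))"
  proof (rule ex_ex1I)
    show "\<exists>P. degree P \<le> N \<and> (\<forall>q\<in>{0..N}. wip a b (poly P) (bern N q) = (if p = q then 1 else 0))"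
      by (rule udual_ex[OF a b])
  next
    fix P P' assume "degree P \<le> N \<and> (\<forall>q\<in>{0..N}. wip a b (poly P) (bern N q) = (if p = q then 1 else 0))"
      "degree P' \<le> N \<and> (\<forall>q\<in>{0..N}. wip a b (poly P') (bern N q) = (if p = q then 1 else 0))"
    thus "P = P'" by (intro wip_uniq[OF a b, of P N P']) auto
  qed
  thus ?thesis unfolding udual_def by (rule theI')
qed

lemma ucoef_spec:
  assumes a: "a > -1" and b: "b > -1"
  shows "poly (udual N a b p) = (\<lambda>x. \<Sum>q=0..N. ucoef N a b p q * bern N q x)"
proof -
  define D where "D = udual N a b p"
  have dD: "degree D \<le> N" using udual_spec[OF a b] unfolding D_def by blast
  have "\<exists>!c. (\<forall>q>N. c q = 0) \<and> poly D = (\<lambda>x. \<Sum>q=0..N. c q * bern N q x)"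
  proof (rule ex_ex1I)
    obtain c where c: "\<And>x. poly D x = (\<Sum>q\<le>N. c q * bern N q x)" using span_bern[OF dD] by blast
    define c' where "c' q = (if q \<le> N then c q else 0)" for q
    have "poly D = (\<lambda>x. \<Sum>q=0..N. c' q * bern N q x)"
      by (rule ext) (simp add: c c'_def atLeast0AtMost)
    moreover have "\<forall>q>N. c' q = 0" by (simp add: c'_def)
    ultimately show "\<exists>c. (\<forall>q>N. c q = 0) \<and> poly D = (\<lambda>x. \<Sum>q=0..N. c q * bern N q x)" by blast
  next
    fix c1 c2
    assume h1: "(\<forall>q>N. c1 q = 0) \<and> poly D = (\<lambda>x. \<Sum>q=0..N. c1 q * bern N q x)"
      and h2: "(\<forall>q>N. c2 q = 0) \<and> poly D = (\<lambda>x. \<Sum>q=0..N. c2 q * bern N q x)"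
    have "(\<Sum>q\<le>N. (c1 q - c2 q) * bern N q x) = 0" for x
    proof -
      have "(\<Sum>q\<le>N. c1 q * bern N q x) = (\<Sum>q\<le>N. c2 q * bern N q x)"
        using fun_cong[OF conjunct2[OF h1], of x] fun_cong[OF conjunct2[OF h2], of x] by (simp add: atLeast0AtMost)
      thus ?thesis by (simp add: left_diff_distrib sum_subtractf)
    qed
    hence "c1 q - c2 q = 0" if "q \<le> N" for q using bern_indep[of "\<lambda>q. c1 q - c2 q" N] that by blast
    thus "c1 = c2" using h1 h2 by (metis eq_iff_diff_eq_0 ext not_le)
  qed
  hence "(\<forall>q>N. ucoef N a b p q = 0) \<and> poly D = (\<lambda>x. \<Sum>q=0..N. ucoef N a b p q * bern N q x)"
    unfolding ucoef_def D_def by (rule theI')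
  thus ?thesis unfolding D_def by blast
qed

lemma pderiv_lin_mult:
  fixes F q :: "real poly"
  assumes dq: "pderiv q = 1"
  shows "(pderiv ^^ Suc i) (q * F) =
    Polynomial.smult (of_nat (Suc i)) ((pderiv ^^ i) F) + q * (pderiv ^^ Suc i) F"
proof (induction i)
  case 0 thus ?case by (simp add: pderiv_mult dq)
next
  case (Suc i)
  have "(pderiv ^^ Suc (Suc i)) (q * F) = pderiv ((pderiv ^^ Suc i) (q * F))" by simp
  also have "\<dots> = Polynomial.smult (of_nat (Suc i)) ((pderiv ^^ Suc i) F) + (pderiv ^^ Suc i) F
      + q * (pderiv ^^ Suc (Suc i)) F"
    unfolding Suc by (simp add: pderiv_add pderiv_smult pderiv_mult dq algebra_simps)
  also have "\<dots> = Polynomial.smult (of_nat (Suc (Suc i))) ((pderiv ^^ Suc i) F) + q * (pderiv ^^ Suc (Suc i)) F"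
    by (simp only: of_nat_Suc smult_add_left smult_1_left add_ac)
  finally show ?case .
qed

lemma dvd_deriv0:
  fixes P :: "real poly"
  assumes "[:-c,1:]^k dvd P" "i < k"
  shows "poly ((pderiv ^^ i) P) c = 0"
proof -
  define q where "q = [:-c,1:]"
  have dq: "pderiv q = 1" and pq: "poly q c = 0" unfolding q_def by (simp_all add: pderiv_pCons)
  have "q^k dvd P \<Longrightarrow> i < k \<Longrightarrow> poly ((pderiv ^^ i) P) c = 0"
  proof (induction k arbitrary: P i)
    case 0 thus ?case by simp
  next
    case (Suc k)
    from Suc.prems(1) obtain R where "P = q^Suc k * R" by (auto elim: dvdE)
    hence P: "P = q * (q^k * R)" by (simp add: mult.assoc)
    show ?case
    proof (cases i)
      case 0 thus ?thesis using P pq by simp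
    next
      case (Suc j)
      hence j: "j < k" using Suc.prems(2) by simp
      have "poly ((pderiv ^^ j) (q^k * R)) c = 0" by (rule Suc.IH[OF _ j]) simp
      thus ?thesis unfolding P Suc pderiv_lin_mult[OF dq] using pq by simp
    qed
  qed
  thus ?thesis using assms unfolding q_def by blast
qed

lemma deriv0_dvd:
  fixes P :: "real poly"
  assumes "\<And>i. i < k \<Longrightarrow> poly ((pderiv ^^ i) P) c = 0"
  shows "[:-c,1:]^k dvd P"
proof -
  define q where "q = [:-c,1:]"
  have dq: "pderiv q = 1" and pq: "poly q c = 0" unfolding q_def by (simp_all add: pderiv_pCons)
  have "(\<And>i. i < k \<Longrightarrow> poly ((pderiv ^^ i) P) c = 0) \<Longrightarrow> q^k dvd P"
  proof (induction k arbitrary: P)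
    case 0 thus ?case by simp
  next
    case (Suc k)
    have "poly P c = 0" using Suc.prems[of 0] by simp
    hence "q dvd P" unfolding q_def by (simp add: poly_eq_0_iff_dvd)
    then obtain P1 where P: "P = q * P1" by (auto elim!: dvdE)
    have "poly ((pderiv ^^ i) P1) c = 0" if i: "i < k" for i
    proof -
      have "poly ((pderiv ^^ Suc i) P) c = 0" using Suc.prems[of "Suc i"] i by simp
      thus ?thesis unfolding P pderiv_lin_mult[OF dq] using pq by simp
    qed
    hence "q^k dvd P1" by (rule Suc.IH)
    thus ?case unfolding P by (simp add: mult_dvd_mono)
  qed
  thus ?thesis using assms unfolding q_def by blast
qed

lemma poly_X: "poly ([:0,1:]^k * [:1,-1:]^l * R) x = x^k * (1-x)^l * poly (R::real poly) x"
  by (simp add: poly_power del: poly_pCons add: poly_1m poly_x)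

lemma bern_shift:
  fixes x :: real
  assumes "k + l \<le> n" "q \<le> n - k - l"
  shows "x^k * (1-x)^l * bern (n-k-l) q x = real (n-k-l choose q) / real (n choose (q+k)) * bern n (q+k) x"
proof -
  have e: "n - (q+k) = (n-k-l-q) + l" using assms by arith
  have nz: "real (n choose (q+k)) \<noteq> 0" using assms by simp
  show ?thesis unfolding bern_def e using nz by (simp add: power_add mult_ac)
qed

lemma powr_pow:
  fixes y a :: real
  assumes "y \<ge> 0"
  shows "y powr a * y^m = y powr (a + real m)"
proof (cases "y = 0")
  case True thus ?thesis by (cases m) auto
next
  case False
  hence "y > 0" using assms by simp
  thus ?thesis by (simp add: powr_add powr_realpow)
qed

lemma wip_shift:
  fixes R :: "real poly"
  assumes kl: "k + l \<le> n" and j: "k \<le> j" "j \<le> n - l"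
  shows "wip \<alpha> \<beta> (\<lambda>x. x^k * (1-x)^l * poly R x) (bern n j) =
    real (n choose j) / real (n-k-l choose (j-k)) *
    wip (\<alpha> + 2 * real l) (\<beta> + 2 * real k) (poly R) (bern (n-k-l) (j-k))"
proof -
  define K where "K = real (n choose j) / real (n-k-l choose (j-k))"
  have q: "j - k \<le> n - k - l" using j kl by arith
  have jq: "j - k + k = j" using j by simp
  have nz1: "real (n-k-l choose (j-k)) \<noteq> 0" using q by simp
  have nz2: "real (n choose j) \<noteq> 0" using j kl by simp
  have bj: "bern n j x = K * (x^k * (1-x)^l * bern (n-k-l) (j-k) x)" for x
    unfolding bern_shift[OF kl q] jq K_def using nz1 nz2 by simp
  have pt: "(1 - x) powr \<alpha> * x powr \<beta> * (x^k * (1-x)^l * poly R x) * bern n j x =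
      K * ((1 - x) powr (\<alpha> + 2 * real l) * x powr (\<beta> + 2 * real k) * poly R x * bern (n-k-l) (j-k) x)"
    if x: "x \<in> {0..1}" for x
  proof -
    have A: "(1-x) powr \<alpha> * ((1-x)^l * (1-x)^l) = (1-x) powr (\<alpha> + 2 * real l)"
      using powr_pow[of "1-x" \<alpha> "l+l"] x by (simp add: power_add)
    have B: "x powr \<beta> * (x^k * x^k) = x powr (\<beta> + 2 * real k)"
      using powr_pow[of x \<beta> "k+k"] x by (simp add: power_add)
    show ?thesis unfolding bj A[symmetric] B[symmetric] by (simp add: mult_ac)
  qed
  have "wip \<alpha> \<beta> (\<lambda>x. x^k * (1-x)^l * poly R x) (bern n j) =
      integral {0..1} (\<lambda>x. K * ((1 - x) powr (\<alpha> + 2 * real l) * x powr (\<beta> + 2 * real k) * poly R x * bern (n-k-l) (j-k) x))"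
    unfolding wip_def by (rule integral_cong) (rule pt)
  also have "\<dots> = K * wip (\<alpha> + 2 * real l) (\<beta> + 2 * real k) (poly R) (bern (n-k-l) (j-k))"
    unfolding wip_def by simp
  finally show ?thesis unfolding K_def .
qed



lemma dvd_m11: "[:-1,1:] dvd ([:1,-1:] :: real poly)"
proof
  show "[:1,-1:] = [:-1,1:] * ([:-1:] :: real poly)" by simp
qed

lemma dvd_11m: "[:1,-1:] dvd ([:-1,1:] :: real poly)"
proof
  show "[:-1,1:] = [:1,-1:] * ([:-1:] :: real poly)" by simp
qed

lemma Pi_decomp:
  assumes P: "P \<in> Pi_kl n k l" and kl: "k + l \<le> n"
  shows "\<exists>R. P = [:0,1:]^k * [:1,-1:]^l * R \<and> degree R \<le> n - k - l"
proof -
  from P have dP: "degree P \<le> n" and c0: "\<And>i. i < k \<Longrightarrow> poly ((pderiv ^^ i) P) 0 = 0"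
    and c1: "\<And>j. j < l \<Longrightarrow> poly ((pderiv ^^ j) P) 1 = 0" unfolding Pi_kl_def by auto
  have "[:-0,1:]^k dvd P" by (rule deriv0_dvd) (rule c0)
  then obtain P1 where P1: "P = [:0,1:]^k * P1" by (auto elim!: dvdE)
  have d1: "[:-1,1:]^l dvd P" by (rule deriv0_dvd) (rule c1)
  have "[:-1,1:]^l dvd P1"
  proof (cases "P1 = 0")
    case True thus ?thesis by simp
  next
    case False
    have x0: "([:0,1:] :: real poly)^k \<noteq> 0" by simp
    have "P \<noteq> 0" unfolding P1 using False x0 by simp
    hence "l \<le> order 1 P" using d1 order_divides by blast
    also have "order 1 P = order 1 (([:0,1:] :: real poly)^k) + order 1 P1"
      unfolding P1 using False x0 by (intro order_mult) simp
    also have "order 1 (([:0,1:] :: real poly)^k) = 0" by (rule order_0I) (simp add: poly_power)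
    finally show ?thesis using order_divides by auto
  qed
  hence "[:1,-1:]^l dvd P1" using dvd_trans[OF dvd_power_same[OF dvd_11m]] by blast
  then obtain R where R: "P1 = [:1,-1:]^l * R" by (auto elim!: dvdE)
  have PR: "P = [:0,1:]^k * [:1,-1:]^l * R" unfolding P1 R by (simp add: mult.assoc)
  have "degree R \<le> n - k - l"
  proof (cases "R = 0")
    case True thus ?thesis by simp
  next
    case False
    have "degree P = degree (([:0,1:] :: real poly)^k * [:1,-1:]^l) + degree R"
      unfolding PR using False by (intro degree_mult_eq) auto
    also have "degree (([:0,1:] :: real poly)^k * [:1,-1:]^l) = k + l"
      by (subst degree_mult_eq) (auto simp: degree_power_eq)
    finally show ?thesis using dP by simp
  qed
  thus ?thesis using PR by blast
qed


theorem theorem3p2: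
  fixes n k l i :: nat and \<alpha> \<beta> :: real
  assumes "k + l \<le> n" and "\<alpha> > -1" and "\<beta> > -1"
    and "k \<le> i" and "i \<le> n - l"
  shows "poly (cdual n k l \<alpha> \<beta> i) =
    (\<lambda>x. \<Sum>j=k..n-l. Ccoef n k l \<alpha> \<beta> i j * bern n j x)"
proof -
  define N where "N = n - k - l"
  define a' where "a' = \<alpha> + 2 * real l"
  define b' where "b' = \<beta> + 2 * real k"
  define p where "p = i - k"
  define D where "D = udual N a' b' p"
  define U where "U = Ucoef n k l i"
  define X where "X = ([:0,1:]^k * [:1,-1:]^l :: real poly)"
  define Q where "Q = Polynomial.smult U (X * D)"
  have a': "a' > -1" unfolding a'_def using assms by simp
  have b': "b' > -1" unfolding b'_def using assms by simp
  have pN: "p \<le> N" unfolding p_def N_def using assms by arith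
  have dD: "degree D \<le> N" and oD: "\<forall>q\<in>{0..N}. wip a' b' (poly D) (bern N q) = (if p = q then 1 else 0)"
    using udual_spec[OF a' b', of N p] unfolding D_def by auto
  have Uj: "Ucoef n k l j = real (N choose (j-k)) / real (n choose j)" for j
    unfolding Ucoef_def N_def ..
  have Unz: "Ucoef n k l j \<noteq> 0" if "k \<le> j" "j \<le> n - l" for j
  proof -
    have "j - k \<le> N" "j \<le> n" using that assms(1) unfolding N_def by arith+
    thus ?thesis unfolding Uj by simp
  qed
  have polyXR: "poly (X * R) = (\<lambda>x. x^k * (1-x)^l * poly R x)" for R
    unfolding X_def by (rule ext) (rule poly_X)
  have shift: "wip \<alpha> \<beta> (poly (X * R)) (bern n j) = 1 / Ucoef n k l j * wip a' b' (poly R) (bern N (j-k))"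
    if "k \<le> j" "j \<le> n-l" for R j
    unfolding polyXR wip_shift[OF assms(1) that] Uj N_def a'_def b'_def by simp
  have orthQ: "wip \<alpha> \<beta> (poly Q) (bern n j) = (if i = j then 1 else 0)" if j: "j \<in> {k..n-l}" for j
  proof -
    have j1: "k \<le> j" "j \<le> n - l" using j by auto
    have jN: "j - k \<in> {0..N}" using j1 assms(1) unfolding N_def by auto
    have "wip \<alpha> \<beta> (poly Q) (bern n j) = U * (1 / Ucoef n k l j * wip a' b' (poly D) (bern N (j-k)))"
      unfolding Q_def wip_smult shift[OF j1] ..
    also have "\<dots> = U * (1 / Ucoef n k l j * (if p = j - k then 1 else 0))"
      using oD jN by simp
    also have "\<dots> = (if i = j then 1 else 0)"
    proof (cases "i = j")
      case True thus ?thesis using Unz[OF j1] unfolding U_def p_def by simp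
    next
      case False
      hence "p \<noteq> j - k" unfolding p_def using j1 assms(4) by arith
      thus ?thesis using False by simp
    qed
    finally show ?thesis .
  qed
  have dX: "degree X \<le> k + l"
  proof -
    have "degree X \<le> degree (([:0,1:] :: real poly)^k) + degree (([:1,-1:] :: real poly)^l)"
      unfolding X_def by (rule degree_mult_le)
    also have "\<dots> \<le> k * 1 + l * 1"
      by (intro add_mono order.trans[OF degree_power_le]) auto
    finally show ?thesis by simp
  qed
  have QPi: "Q \<in> Pi_kl n k l"
    unfolding Pi_kl_def
  proof (intro CollectI conjI allI impI)
    have "degree Q \<le> degree (X * D)" unfolding Q_def by (rule degree_smult_le)
    also have "\<dots> \<le> degree X + degree D" by (rule degree_mult_le)
    also have "\<dots> \<le> n" using dX dD assms(1) unfolding N_def by arith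
    finally show "degree Q \<le> n" .
  next
    fix i' assume i': "i' < k"
    have "[:-0,1:]^k dvd Q" unfolding Q_def X_def by (intro dvd_smult) (simp add: mult.assoc)
    thus "poly ((pderiv ^^ i') Q) 0 = 0" using dvd_deriv0[OF _ i'] by simp
  next
    fix j' assume j': "j' < l"
    have dl: "[:-1,1:]^l dvd ([:1,-1:]^l :: real poly)" by (rule dvd_power_same[OF dvd_m11])
    have "[:-1,1:]^l dvd Q" unfolding Q_def X_def
      by (intro dvd_smult) (rule dvd_mult2[OF dvd_mult[OF dl]])
    thus "poly ((pderiv ^^ j') Q) 1 = 0" using dvd_deriv0[OF _ j'] by simp
  qed
  have uniq: "P = Q" if P: "P \<in> Pi_kl n k l"
    and oP: "\<forall>j\<in>{k..n-l}. wip \<alpha> \<beta> (poly P) (bern n j) = (if i = j then 1 else 0)" for P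
  proof -
    obtain R where PR: "P = X * R" and dR: "degree R \<le> N"
      using Pi_decomp[OF P assms(1)] unfolding X_def N_def by blast
    have "R = Polynomial.smult U D"
    proof (rule wip_uniq[OF a' b' dR])
      show "degree (Polynomial.smult U D) \<le> N" using dD degree_smult_le order.trans by blast
    next
      fix q assume q: "q \<le> N"
      have j: "k \<le> q + k" "q + k \<le> n - l" using q assms(1) unfolding N_def by arith+
      have qk: "q + k - k = q" by simp
      have h0: "wip \<alpha> \<beta> (poly P) (bern n (q+k)) = 1 / Ucoef n k l (q+k) * wip a' b' (poly R) (bern N q)"
        using shift[OF j, of R] unfolding PR qk .
      have h1: "wip \<alpha> \<beta> (poly P) (bern n (q+k)) = (if i = q + k then 1 else 0)" using oP j by simp
      have "wip a' b' (poly R) (bern N q) = Ucoef n k l (q+k) * (1 / Ucoef n k l (q+k) * wip a' b' (poly R) (bern N q))"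
        using Unz[OF j] by simp
      also have "\<dots> = Ucoef n k l (q+k) * (if i = q + k then 1 else 0)"
        by (simp only: h0[symmetric] h1)
      finally have e1: "wip a' b' (poly R) (bern N q) = Ucoef n k l (q+k) * (if i = q + k then 1 else 0)" .
      have e2: "wip a' b' (poly (Polynomial.smult U D)) (bern N q) = U * (if p = q then 1 else 0)"
        using oD q unfolding wip_smult by simp
      have iff: "(i = q + k) = (p = q)" unfolding p_def using assms(4) by arith
      have "Ucoef n k l (q+k) * (if i = q + k then 1 else 0) = U * (if p = q then 1 else 0)"
        unfolding iff U_def p_def using assms(4) by auto
      thus "wip a' b' (poly R) (bern N q) = wip a' b' (poly (Polynomial.smult U D)) (bern N q)"
        by (simp only: e1 e2)
    qed
    thus "P = Q" unfolding PR Q_def by (simp add: mult_smult_right)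
  qed
  have cd: "cdual n k l \<alpha> \<beta> i = Q"
    unfolding cdual_def
  proof (rule the_equality)
    show "Q \<in> Pi_kl n k l \<and> (\<forall>j\<in>{k..n - l}. wip \<alpha> \<beta> (poly Q) (bern n j) = (if i = j then 1 else 0))"
      using QPi orthQ by blast
  next
    fix P assume "P \<in> Pi_kl n k l \<and> (\<forall>j\<in>{k..n - l}. wip \<alpha> \<beta> (poly P) (bern n j) = (if i = j then 1 else 0))"
    thus "P = Q" using uniq by blast
  qed
  show ?thesis
  proof (rule ext)
    fix x
    have "poly Q x = U * (x^k * (1-x)^l * (\<Sum>q=0..N. ucoef N a' b' p q * bern N q x))"
      unfolding Q_def poly_smult polyXR ucoef_spec[OF a' b', of N p, folded D_def] ..
    also have "\<dots> = (\<Sum>q=0..N. U * ucoef N a' b' p q * Ucoef n k l (q+k) * bern n (q+k) x)"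
      unfolding sum_distrib_left
    proof (rule sum.cong[OF refl])
      fix q assume "q \<in> {0..N}"
      hence q: "q \<le> n - k - l" unfolding N_def by simp
      have "x^k * (1-x)^l * (ucoef N a' b' p q * bern N q x) = ucoef N a' b' p q * (x^k * (1-x)^l * bern N q x)"
        by (simp add: mult_ac)
      also have "\<dots> = ucoef N a' b' p q * (Ucoef n k l (q+k) * bern n (q+k) x)"
        unfolding N_def bern_shift[OF assms(1) q] Uj by (simp add: N_def)
      finally show "U * (x^k * (1-x)^l * (ucoef N a' b' p q * bern N q x)) =
          U * ucoef N a' b' p q * Ucoef n k l (q+k) * bern n (q+k) x" by (simp add: mult_ac)
    qed
    also have "\<dots> = (\<Sum>j\<in>{0+k..N+k}. U * ucoef N a' b' p (j-k) * Ucoef n k l j * bern n j x)"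
      by (subst sum.shift_bounds_cl_nat_ivl) simp
    also have "{0+k..N+k} = {k..n-l}" unfolding N_def using assms(1) by auto
    also have "(\<Sum>j\<in>{k..n-l}. U * ucoef N a' b' p (j-k) * Ucoef n k l j * bern n j x) =
        (\<Sum>j=k..n-l. Ccoef n k l \<alpha> \<beta> i j * bern n j x)"
      unfolding Ccoef_def U_def N_def a'_def b'_def p_def by (simp add: mult_ac)
    finally show "poly (cdual n k l \<alpha> \<beta> i) x = (\<Sum>j=k..n-l. Ccoef n k l \<alpha> \<beta> i j * bern n j x)"
      unfolding cd .
  qed
qed

end
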